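(* Let $B\subset\mathbb R^d$ be a convex body and let $C_1\cup\dots\cup C_k=B$ be a hierarchical affine partition of $B$ with all $C_i$ nonempty. Then $\sum_{i=1}^k r_B(C_i)\ge 1$. In particular this holds for binary partitions of $B$ by hyperplanes (where repeatedly one current part is cut into two by a hyperplane).
   Context: A convex body is a compact convex set with nonempty interior. For affine functions $\lambda_1,\dots,\lambda_k$ on $\mathbb R^d$, the affine partition of a set $X\subseteq\mathbb R^d$ they determine consists of the sets $X\cap\{x:\lambda_i(x)\le\lambda_j(x)\ \forall j\ne i\}$. Hierarchical affine partitions of $B$ are defined recursively: every affine partition of $B$ is hierarchical; replacing a part $C_i$ of a hierarchical affine partition by the parts of an affine partition of $C_i$ gives again a hierarchical affine partition. For a convex body $B$ and a convex set $C$, $r_B(C)=\sup\{h\ge 0:\exists t\in\mathbb R^d,\ hB+t\subseteq C\}$, with $r_B(\emptyset)=-\infty$. *)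

theory Defs
  imports "HOL-Analysis.Analysis" "HOL-Library.Extended_Real"
begin

definition convex_body :: "'a::euclidean_space set \<Rightarrow> bool" where
  "convex_body B \<longleftrightarrow> compact B \<and> convex B \<and> interior B \<noteq> {}"

definition aff_eval :: "'a::euclidean_space \<times> real \<Rightarrow> 'a \<Rightarrow> real" where
  "aff_eval l x = fst l \<bullet> x + snd l"

definition affine_partition :: "'a::euclidean_space set \<Rightarrow> ('a \<times> real) list \<Rightarrow> 'a set list" where
  "affine_partition X ls =
     map (\<lambda>i. X \<inter> {x. \<forall>j<length ls. j \<noteq> i \<longrightarrow> aff_eval (ls ! i) x \<le> aff_eval (ls ! j) x})
         [0..<length ls]"

inductive hier_affine_partition :: "'a::euclidean_space set \<Rightarrow> 'a set list \<Rightarrow> bool"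
  for B :: "'a set" where
  base: "ls \<noteq> [] \<Longrightarrow> hier_affine_partition B (affine_partition B ls)"
| refine: "hier_affine_partition B P \<Longrightarrow> i < length P \<Longrightarrow> ls \<noteq> [] \<Longrightarrow>
     hier_affine_partition B (take i P @ affine_partition (P ! i) ls @ drop (Suc i) P)"

definition inradius_rel :: "'a::euclidean_space set \<Rightarrow> 'a set \<Rightarrow> ereal" where
  "inradius_rel B C = (if C = {} then -\<infinity>
     else Sup (ereal ` {h. h \<ge> 0 \<and> (\<exists>t. (\<lambda>x. h *\<^sub>R x + t) ` B \<subseteq> C)}))"

end

theory Submission
  imports Defs
begin



definition stoch :: "nat set \<Rightarrow> (nat \<Rightarrow> nat \<Rightarrow> real) \<Rightarrow> bool" where
  "stoch S W \<longleftrightarrow> (\<forall>l\<in>S. \<forall>j\<in>S. W l j \<ge> 0) \<and> (\<forall>l\<in>S. sum (W l) S = 1)"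

definition stat :: "nat set \<Rightarrow> (nat \<Rightarrow> nat \<Rightarrow> real) \<Rightarrow> (nat \<Rightarrow> real) \<Rightarrow> bool" where
  "stat S W p \<longleftrightarrow> (\<forall>l\<in>S. p l \<ge> 0) \<and> (\<forall>j\<in>S. (\<Sum>l\<in>S. p l * W l j) = p j)"

lemma stoch_le1: "stoch S W \<Longrightarrow> finite S \<Longrightarrow> l \<in> S \<Longrightarrow> j \<in> S \<Longrightarrow> W l j \<le> 1"
proof -
  assume a: "stoch S W" "finite S" "l \<in> S" "j \<in> S"
  have "W l j \<le> sum (W l) S" by (rule member_le_sum) (use a in \<open>auto simp: stoch_def\<close>)
  then show ?thesis using a by (auto simp: stoch_def)
qed

lemma stoch_absorb: assumes "stoch S W" "finite S" "l \<in> S" "W l l \<ge> 1" "j \<in> S" "j \<noteq> l"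
  shows "W l j = 0"
proof -
  have nn: "\<forall>x\<in>S - {l}. 0 \<le> W l x" using assms(1) assms(3) unfolding stoch_def by auto
  have "sum (W l) S = W l l + sum (W l) (S - {l})" using assms(2,3) by (simp add: sum.remove)
  moreover have "W l l \<le> 1" using stoch_le1 assms by auto
  ultimately have "sum (W l) (S - {l}) = 0" using assms(1,3,4) unfolding stoch_def by auto
  then show ?thesis using sum_nonneg_eq_0_iff[of "S - {l}" "W l"] nn assms by auto
qed

definition elimW :: "nat \<Rightarrow> (nat \<Rightarrow> nat \<Rightarrow> real) \<Rightarrow> (nat \<Rightarrow> nat \<Rightarrow> real)" where
  "elimW m W = (\<lambda>l j. W l j + W l m * W m j / (1 - W m m))"

lemma stoch_elim:
  assumes st: "stoch S W" and fin: "finite S" and m: "m \<in> S" and d: "W m m < 1"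
  shows "stoch (S - {m}) (elimW m W)"
proof -
  let ?d = "1 - W m m"
  have dpos: "?d > 0" using d by auto
  have nn: "elimW m W l j \<ge> 0" if "l \<in> S - {m}" "j \<in> S - {m}" for l j
    using st that m dpos unfolding stoch_def elimW_def by (auto intro!: add_nonneg_nonneg divide_nonneg_pos)
  have rs: "sum (elimW m W l) (S - {m}) = 1" if l: "l \<in> S - {m}" for l
  proof -
    have r1: "sum (W l) (S - {m}) = 1 - W l m"
      using st l sum.remove[OF fin m, of "W l"] unfolding stoch_def by auto
    have r2: "sum (W m) (S - {m}) = ?d"
      using st m sum.remove[OF fin m, of "W m"] unfolding stoch_def by auto
    have "sum (elimW m W l) (S - {m}) = sum (W l) (S - {m}) + W l m / ?d * sum (W m) (S - {m})"
      unfolding elimW_def by (simp add: sum.distrib sum_distrib_left)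
    also have "\<dots> = 1" using r1 r2 dpos by simp
    finally show ?thesis .
  qed
  show ?thesis unfolding stoch_def using nn rs by auto
qed

lemma stat_exists:
  assumes "finite S" "S \<noteq> {}" "stoch S W"
  shows "\<exists>p. stat S W p \<and> (\<exists>i\<in>S. p i > 0)"
  using assms
proof (induction "card S" arbitrary: S W rule: less_induct)
  case less
  then obtain m where m: "m \<in> S" by auto
  show ?case
  proof (cases "W m m < 1")
    case False
    define p where "p = (\<lambda>l. if l = m then 1 else 0::real)"
    have "stat S W p" unfolding stat_def
    proof safe
      fix j assume j: "j \<in> S"
      have "(\<Sum>l\<in>S. p l * W l j) = (\<Sum>l\<in>S. if l = m then W m j else 0)"
        by (rule sum.cong) (auto simp: p_def)
      also have "\<dots> = W m j" using less(2) m by simp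
      also have "\<dots> = p j"
        using stoch_absorb[OF less(4) less(2) m _ j] False stoch_le1[OF less(4) less(2) m m] unfolding p_def by auto
      finally show "(\<Sum>l\<in>S. p l * W l j) = p j" .
    qed (auto simp: p_def)
    then show ?thesis using m by (auto simp: p_def intro!: exI[of _ p])
  next
    case True
    let ?S = "S - {m}" and ?d = "1 - W m m"
    have dpos: "?d > 0" using True by auto
    have ne: "?S \<noteq> {}"
    proof
      assume "?S = {}"
      then have "S = {m}" using m by auto
      then show False using less(4) True unfolding stoch_def by auto
    qed
    have "card ?S < card S" using m less(2) by (meson card_Diff1_less)
    from less(1)[OF this _ ne stoch_elim[OF less(4) less(2) m True]] less(2)
    obtain q where q: "stat ?S (elimW m W) q" and qi: "\<exists>i\<in>?S. q i > 0" by auto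
    define pm where "pm = (\<Sum>l\<in>?S. q l * W l m) / ?d"
    define p where "p = (\<lambda>l. if l = m then pm else q l)"
    have pm_eq: "(\<Sum>l\<in>?S. q l * W l m) = pm * ?d" unfolding pm_def using dpos by simp
    have sumS: "(\<Sum>l\<in>S. p l * W l j) = (\<Sum>l\<in>?S. q l * W l j) + pm * W m j" for j
      using less(2) m by (simp add: sum.remove p_def add.commute)
    have "stat S W p" unfolding stat_def
    proof safe
      fix l assume "l \<in> S"
      show "0 \<le> p l"
      proof (cases "l = m")
        case True
        have "0 \<le> (\<Sum>l\<in>?S. q l * W l m)" using q less(4) m unfolding stat_def stoch_def
          by (auto intro!: sum_nonneg mult_nonneg_nonneg)
        then show ?thesis using True dpos by (simp add: p_def pm_def)
      next
        case False then show ?thesis using q \<open>l \<in> S\<close> by (auto simp: p_def stat_def)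
      qed
    next
      fix j assume j: "j \<in> S"
      show "(\<Sum>l\<in>S. p l * W l j) = p j"
      proof (cases "j = m")
        case True
        then show ?thesis using sumS[of m] pm_eq by (simp add: p_def algebra_simps)
      next
        case False
        have "q j = (\<Sum>l\<in>?S. q l * elimW m W l j)" using q j False unfolding stat_def by auto
        also have "\<dots> = (\<Sum>l\<in>?S. q l * W l j + (q l * W l m) * (W m j / ?d))"
          by (rule sum.cong) (simp_all add: elimW_def algebra_simps)
        also have "\<dots> = (\<Sum>l\<in>?S. q l * W l j) + (\<Sum>l\<in>?S. q l * W l m) * (W m j / ?d)"
          by (simp only: sum.distrib sum_distrib_right)
        also have "\<dots> = (\<Sum>l\<in>?S. q l * W l j) + pm * W m j" using pm_eq dpos by simp
        finally show ?thesis using sumS[of j] False by (simp add: p_def)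
      qed
    qed
    then show ?thesis using qi by (auto simp: p_def intro!: exI[of _ p])
  qed
qed

lemma markov_bound:
  assumes "finite S" "stoch S W" "stat S W p" "\<forall>l\<in>S. \<alpha> l \<ge> 0"
    "\<forall>v\<in>V. \<forall>l\<in>S. (\<Sum>j\<in>S. W l j * (v j - v l)) \<le> \<alpha> l"
    "i \<in> S" "\<forall>j\<in>S. u j \<in> V"
  shows "p i * (\<alpha> i + (\<Sum>j\<in>S. W i j * (u j i - u j j))) \<le> (\<Sum>l\<in>S. p l * \<alpha> l)"
  using assms
proof (induction "card S" arbitrary: S W p \<alpha> u rule: less_induct)
  case less
  note fin = less(2) and st = less(3) and sp = less(4) and anneg = less(5) and Vc = less(6)
    and iS = less(7) and uV = less(8)
  have pnn: "\<forall>l\<in>S. p l \<ge> 0" using sp by (auto simp: stat_def)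
  have RHSnn: "0 \<le> (\<Sum>l\<in>S. p l * \<alpha> l)" using pnn anneg by (auto intro!: sum_nonneg)
  show ?case
  proof (cases "\<exists>m\<in>S. m \<noteq> i \<and> W m m < 1")
    case False
    have Wm1: "W l l \<ge> 1" if "l \<in> S" "l \<noteq> i" for l using False that by auto
    have Wli: "W l i = 0" if "l \<in> S" "l \<noteq> i" for l
      using stoch_absorb[OF st fin that(1) Wm1[OF that] iS] that by auto
    have "p i = (\<Sum>l\<in>S. p l * W l i)" using sp iS by (auto simp: stat_def)
    also have "\<dots> = p i * W i i + (\<Sum>l\<in>S - {i}. p l * W l i)"
      using sum.remove[OF fin iS] by auto
    also have "(\<Sum>l\<in>S - {i}. p l * W l i) = 0" using Wli by (auto intro!: sum.neutral)
    finally have pii: "p i = p i * W i i" by simp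
    show ?thesis
    proof (cases "W i i < 1")
      case True
      then have "p i = 0" using pii by (metis mult.right_neutral mult_left_cancel less_irrefl)
      then show ?thesis using RHSnn by simp
    next
      case False
      have "W i j = 0" if "j \<in> S" "j \<noteq> i" for j
        using stoch_absorb[OF st fin iS _ that] False by auto
      then have "(\<Sum>j\<in>S. W i j * (u j i - u j j)) = 0"
        by (intro sum.neutral) (metis cancel_comm_monoid_add_class.diff_cancel mult_eq_0_iff)
      moreover have "p i * \<alpha> i \<le> (\<Sum>l\<in>S. p l * \<alpha> l)"
        by (rule member_le_sum) (use iS pnn anneg fin in auto)
      ultimately show ?thesis by simp
    qed
  next
    case True
    then obtain m where m: "m \<in> S" "m \<noteq> i" "W m m < 1" by auto
    define S' where "S' = S - {m}"
    define d where "d = 1 - W m m"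
    have dpos: "d > 0" using m by (simp add: d_def)
    define W' where "W' = elimW m W"
    have W'_def2: "W' l j = W l j + W l m * W m j / d" for l j by (simp add: W'_def elimW_def d_def)
    define \<alpha>' where "\<alpha>' = (\<lambda>l. \<alpha> l + W l m * \<alpha> m / d)"
    define u' where "u' = (\<lambda>j. if u m i - u m j \<le> u j i - u j j then u j else u m)"
    have fin': "finite S'" using fin by (simp add: S'_def)
    have iS': "i \<in> S'" using iS m by (simp add: S'_def)
    have Wnn: "\<forall>l\<in>S. \<forall>j\<in>S. W l j \<ge> 0" using st by (simp add: stoch_def)
    have sumS: "(\<Sum>j\<in>S. f j) = f m + (\<Sum>j\<in>S'. f j)" for f :: "nat \<Rightarrow> real"
      using sum.remove[OF fin m(1)] by (simp add: S'_def)
    have rowm: "(\<Sum>j\<in>S'. W m j) = d"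
      using st m(1) sumS[of "W m"] by (simp add: stoch_def d_def)
    have statm: "(\<Sum>l\<in>S'. p l * W l m) = p m * d"
      using sp m(1) sumS[of "\<lambda>l. p l * W l m"] by (simp add: stat_def d_def algebra_simps)
    have keym: "d * (v i - v m) \<le> \<alpha> m + (\<Sum>j\<in>S'. W m j * (v i - v j))" if v: "v \<in> V" for v
    proof -
      have "(\<Sum>j\<in>S'. W m j * (v j - v m)) = (\<Sum>j\<in>S. W m j * (v j - v m))"
        using sumS[of "\<lambda>j. W m j * (v j - v m)"] by simp
      also have "\<dots> \<le> \<alpha> m" using Vc v m(1) by auto
      finally have a: "(\<Sum>j\<in>S'. W m j * (v j - v m)) \<le> \<alpha> m" .
      have "(\<Sum>j\<in>S'. W m j * (v i - v j)) = (\<Sum>j\<in>S'. W m j * (v i - v m) - W m j * (v j - v m))"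
        by (rule sum.cong) (auto simp: algebra_simps)
      also have "\<dots> = d * (v i - v m) - (\<Sum>j\<in>S'. W m j * (v j - v m))"
        by (simp add: sum_subtractf sum_distrib_right[symmetric] rowm)
      finally show ?thesis using a by simp
    qed
    have st': "stoch S' W'" using stoch_elim[OF st fin m(1) m(3)] by (simp add: S'_def W'_def)
    have sp': "stat S' W' p" unfolding stat_def
    proof safe
      fix l assume "l \<in> S'" then show "0 \<le> p l" using pnn by (auto simp: S'_def)
    next
      fix j assume j: "j \<in> S'"
      have "(\<Sum>l\<in>S'. p l * W' l j) = (\<Sum>l\<in>S'. p l * W l j + (p l * W l m) * (W m j / d))"
        by (rule sum.cong) (simp_all add: W'_def2 algebra_simps)
      also have "\<dots> = (\<Sum>l\<in>S'. p l * W l j) + (\<Sum>l\<in>S'. p l * W l m) * (W m j / d)"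
        by (simp only: sum.distrib sum_distrib_right)
      also have "\<dots> = (\<Sum>l\<in>S'. p l * W l j) + p m * W m j" using statm dpos by simp
      also have "\<dots> = (\<Sum>l\<in>S. p l * W l j)" using sumS[of "\<lambda>l. p l * W l j"] by simp
      also have "\<dots> = p j" using sp j by (auto simp: stat_def S'_def)
      finally show "(\<Sum>l\<in>S'. p l * W' l j) = p j" .
    qed
    have an': "\<forall>l\<in>S'. \<alpha>' l \<ge> 0"
      using anneg Wnn m(1) dpos by (auto simp: \<alpha>'_def S'_def intro!: add_nonneg_nonneg divide_nonneg_pos)
    have Vc': "\<forall>v\<in>V. \<forall>l\<in>S'. (\<Sum>j\<in>S'. W' l j * (v j - v l)) \<le> \<alpha>' l"
    proof safe
      fix v l assume v: "v \<in> V" and l: "l \<in> S'"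
      have Wlm: "W l m \<ge> 0" using Wnn l m(1) by (auto simp: S'_def)
      have "(\<Sum>j\<in>S'. W' l j * (v j - v l)) = (\<Sum>j\<in>S'. W l j * (v j - v l) + W l m / d * (W m j * (v j - v l)))"
        by (rule sum.cong) (simp_all add: W'_def2 algebra_simps add_divide_distrib[symmetric])
      also have "\<dots> = (\<Sum>j\<in>S'. W l j * (v j - v l)) + W l m / d * (\<Sum>j\<in>S'. W m j * (v j - v l))"
        by (simp only: sum.distrib sum_distrib_left)
      also have "(\<Sum>j\<in>S'. W m j * (v j - v l)) = (\<Sum>j\<in>S'. W m j * (v j - v m) + W m j * (v m - v l))"
        by (rule sum.cong) (auto simp: algebra_simps)
      also have "\<dots> = (\<Sum>j\<in>S'. W m j * (v j - v m)) + d * (v m - v l)"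
        by (simp add: sum.distrib sum_distrib_right[symmetric] rowm)
      finally have e1: "(\<Sum>j\<in>S'. W' l j * (v j - v l)) = (\<Sum>j\<in>S'. W l j * (v j - v l)) + W l m / d * ((\<Sum>j\<in>S'. W m j * (v j - v m)) + d * (v m - v l))" .
      have "(\<Sum>j\<in>S'. W m j * (v j - v m)) = (\<Sum>j\<in>S. W m j * (v j - v m))"
        using sumS[of "\<lambda>j. W m j * (v j - v m)"] by simp
      also have "\<dots> \<le> \<alpha> m" using Vc v m(1) by auto
      finally have a: "(\<Sum>j\<in>S'. W m j * (v j - v m)) \<le> \<alpha> m" .
      have "W l m / d * ((\<Sum>j\<in>S'. W m j * (v j - v m)) + d * (v m - v l)) \<le> W l m / d * (\<alpha> m + d * (v m - v l))"
        using a Wlm dpos by (intro mult_left_mono) auto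
      also have "\<dots> = W l m * \<alpha> m / d + W l m * (v m - v l)" using dpos by (simp add: field_simps)
      finally have e2: "W l m / d * ((\<Sum>j\<in>S'. W m j * (v j - v m)) + d * (v m - v l)) \<le> W l m * \<alpha> m / d + W l m * (v m - v l)" .
      have "(\<Sum>j\<in>S'. W l j * (v j - v l)) + W l m * (v m - v l) = (\<Sum>j\<in>S. W l j * (v j - v l))"
        using sumS[of "\<lambda>j. W l j * (v j - v l)"] by simp
      also have "\<dots> \<le> \<alpha> l" using Vc v l by (auto simp: S'_def)
      finally show "(\<Sum>j\<in>S'. W' l j * (v j - v l)) \<le> \<alpha>' l" using e1 e2 by (simp add: \<alpha>'_def)
    qed
    have uV': "\<forall>j\<in>S'. u' j \<in> V" using uV m(1) by (auto simp: u'_def S'_def)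
    have card': "card S' < card S" using fin m(1) unfolding S'_def by (meson card_Diff1_less)
    have IH: "p i * (\<alpha>' i + (\<Sum>j\<in>S'. W' i j * (u' j i - u' j j))) \<le> (\<Sum>l\<in>S'. p l * \<alpha>' l)"
      using less(1)[OF card' fin' st' sp' an' Vc' iS' uV'] .
    have f1: "(\<Sum>l\<in>S'. p l * \<alpha>' l) = (\<Sum>l\<in>S. p l * \<alpha> l)"
    proof -
      have "(\<Sum>l\<in>S'. p l * \<alpha>' l) = (\<Sum>l\<in>S'. p l * \<alpha> l + (p l * W l m) * (\<alpha> m / d))"
        by (rule sum.cong) (simp_all add: \<alpha>'_def algebra_simps)
      also have "\<dots> = (\<Sum>l\<in>S'. p l * \<alpha> l) + (\<Sum>l\<in>S'. p l * W l m) * (\<alpha> m / d)"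
        by (simp only: sum.distrib sum_distrib_right)
      also have "\<dots> = (\<Sum>l\<in>S'. p l * \<alpha> l) + p m * \<alpha> m" using statm dpos by simp
      also have "\<dots> = (\<Sum>l\<in>S. p l * \<alpha> l)" using sumS[of "\<lambda>l. p l * \<alpha> l"] by simp
      finally show ?thesis .
    qed
    have Wim: "W i m \<ge> 0" using Wnn iS m(1) by auto
    have f2: "\<alpha> i + (\<Sum>j\<in>S. W i j * (u j i - u j j)) \<le> \<alpha>' i + (\<Sum>j\<in>S'. W' i j * (u' j i - u' j j))"
    proof -
      have t: "W' i j * (u' j i - u' j j) \<ge> W i j * (u j i - u j j) + W i m / d * (W m j * (u m i - u m j))"
        if j: "j \<in> S'" for j
      proof -
        have a1: "W i j \<ge> 0" "W m j \<ge> 0" using Wnn j iS m(1) by (auto simp: S'_def)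
        have a2: "W i m / d * W m j \<ge> 0" using a1 Wim dpos by simp
        have mx: "u' j i - u' j j = max (u j i - u j j) (u m i - u m j)" by (auto simp: u'_def)
        have "W i j * (u j i - u j j) \<le> W i j * (u' j i - u' j j)"
          using a1 mx by (intro mult_left_mono) auto
        moreover have "W i m / d * W m j * (u m i - u m j) \<le> W i m / d * W m j * (u' j i - u' j j)"
          using a2 mx by (intro mult_left_mono) auto
        moreover have "W' i j = W i j + W i m / d * W m j" by (simp add: W'_def2)
        ultimately show ?thesis by (simp only: distrib_right mult.assoc[symmetric])
      qed
      have "(\<Sum>j\<in>S'. W i j * (u j i - u j j) + W i m / d * (W m j * (u m i - u m j))) \<le> (\<Sum>j\<in>S'. W' i j * (u' j i - u' j j))"
        using t by (rule sum_mono)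
      then have s1: "(\<Sum>j\<in>S'. W i j * (u j i - u j j)) + W i m / d * (\<Sum>j\<in>S'. W m j * (u m i - u m j)) \<le> (\<Sum>j\<in>S'. W' i j * (u' j i - u' j j))"
        by (simp only: sum.distrib sum_distrib_left)
      have k: "d * (u m i - u m m) \<le> \<alpha> m + (\<Sum>j\<in>S'. W m j * (u m i - u m j))"
        using keym uV m(1) by auto
      have "W i m * (u m i - u m m) = W i m / d * (d * (u m i - u m m))" using dpos by simp
      also have "\<dots> \<le> W i m / d * (\<alpha> m + (\<Sum>j\<in>S'. W m j * (u m i - u m j)))"
        using k Wim dpos by (intro mult_left_mono) auto
      also have "\<dots> = W i m * \<alpha> m / d + W i m / d * (\<Sum>j\<in>S'. W m j * (u m i - u m j))"
        by (simp add: algebra_simps)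
      finally have k2: "W i m * (u m i - u m m) \<le> W i m * \<alpha> m / d + W i m / d * (\<Sum>j\<in>S'. W m j * (u m i - u m j))" .
      have "(\<Sum>j\<in>S. W i j * (u j i - u j j)) = W i m * (u m i - u m m) + (\<Sum>j\<in>S'. W i j * (u j i - u j j))"
        using sumS[of "\<lambda>j. W i j * (u j i - u j j)"] by simp
      then show ?thesis using s1 k2 by (simp add: \<alpha>'_def)
    qed
    have "p i * (\<alpha> i + (\<Sum>j\<in>S. W i j * (u j i - u j j))) \<le> p i * (\<alpha>' i + (\<Sum>j\<in>S'. W' i j * (u' j i - u' j j)))"
      using f2 pnn iS by (intro mult_left_mono) auto
    then show ?thesis using IH f1 by simp
  qed
qed



definition aff :: "('a::euclidean_space \<Rightarrow> real) \<Rightarrow> bool" where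
  "aff g \<longleftrightarrow> (\<exists>c b. \<forall>x. g x = c \<bullet> x + b)"

lemma aff_cont: "aff g \<Longrightarrow> continuous_on S g"
  unfolding aff_def by (auto intro!: continuous_intros)

lemma aff_comb: "aff g \<Longrightarrow> u + v = 1 \<Longrightarrow> g (u *\<^sub>R x + v *\<^sub>R y) = u * g x + v * g y"
  unfolding aff_def by (auto simp: inner_add_right algebra_simps) (metis distrib_left mult.right_neutral)

lemma aff_sum:
  assumes "finite J" "\<forall>j\<in>J. aff (f j)"
  shows "aff (\<lambda>x. \<Sum>j\<in>J. w j * f j x)"
proof -
  from assms(2) have "\<forall>j\<in>J. \<exists>cb. \<forall>x. f j x = fst cb \<bullet> x + snd cb" unfolding aff_def by auto
  then obtain cb where cb: "\<forall>j\<in>J. \<forall>x. f j x = fst (cb j) \<bullet> x + snd (cb j)" by metis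
  have "(\<Sum>j\<in>J. w j * f j x) = (\<Sum>j\<in>J. w j *\<^sub>R fst (cb j)) \<bullet> x + (\<Sum>j\<in>J. w j * snd (cb j))" for x
    using cb by (simp add: inner_sum_left sum.distrib[symmetric] distrib_left)
  then show ?thesis unfolding aff_def by blast
qed

lemma minimax2:
  fixes K :: "'a::euclidean_space set"
  assumes K: "compact K" "convex K" and affs: "aff G" "aff g"
    and h: "\<forall>p\<in>K. G p > 0 \<or> g p > 0"
  shows "\<exists>\<theta>. 0 \<le> \<theta> \<and> \<theta> \<le> 1 \<and> (\<forall>p\<in>K. \<theta> * G p + (1 - \<theta>) * g p > 0)"
proof (cases "K = {}")
  case True then show ?thesis by (intro exI[of _ 0]) auto
next
  case False
  define S where "S = (\<lambda>p. (G p, g p)) ` K"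
  define T where "T = {z::real\<times>real. fst z \<le> 0 \<and> snd z \<le> 0}"
  have cS: "convex S" unfolding S_def convex_def
  proof safe
    fix x y :: 'a and u v :: real assume xy: "x \<in> K" "y \<in> K" "0 \<le> u" "0 \<le> v" "u + v = 1"
    have "u *\<^sub>R x + v *\<^sub>R y \<in> K" using K(2) xy unfolding convex_def by auto
    moreover have "u *\<^sub>R (G x, g x) + v *\<^sub>R (G y, g y) = (G (u *\<^sub>R x + v *\<^sub>R y), g (u *\<^sub>R x + v *\<^sub>R y))"
      using aff_comb[OF affs(1) xy(5)] aff_comb[OF affs(2) xy(5)] by simp
    ultimately show "u *\<^sub>R (G x, g x) + v *\<^sub>R (G y, g y) \<in> (\<lambda>p. (G p, g p)) ` K" by auto
  qed
  have kS: "compact S" unfolding S_def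
    by (rule compact_continuous_image[OF _ K(1)]) (intro continuous_on_Pair aff_cont affs)
  have neS: "S \<noteq> {}" using False by (simp add: S_def)
  have cT: "convex T" unfolding T_def convex_def
    by (auto intro!: add_nonpos_nonpos mult_nonneg_nonpos)
  have clT: "closed T" unfolding T_def
    by (intro closed_Collect_conj closed_Collect_le) (auto intro: continuous_intros)
  have dis: "S \<inter> T = {}" using h by (auto simp: S_def T_def)
  obtain a b where ab: "\<forall>x\<in>S. inner a x < b" "\<forall>x\<in>T. inner a x > b"
    using separating_hyperplane_compact_closed[OF cS kS neS cT clT dis] by auto
  obtain a1 a2 where a: "a = (a1, a2)" by (cases a)
  have "(0::real, 0::real) \<in> T" by (simp add: T_def)
  then have "inner a (0, 0) > b" using ab(2) by blast
  then have b0: "b < 0" by (simp add: a)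
  have a1: "a1 \<le> 0"
  proof (rule ccontr)
    assume "\<not> a1 \<le> 0"
    then have "(- (- b / a1), 0) \<in> T" using b0 by (auto simp: T_def field_simps)
    then have "inner a (- (- b / a1), 0) > b" using ab(2) by blast
    then show False using \<open>\<not> a1 \<le> 0\<close> by (simp add: a)
  qed
  have a2: "a2 \<le> 0"
  proof (rule ccontr)
    assume "\<not> a2 \<le> 0"
    then have "(0, - (- b / a2)) \<in> T" using b0 by (auto simp: T_def field_simps)
    then have "inner a (0, - (- b / a2)) > b" using ab(2) by blast
    then show False using \<open>\<not> a2 \<le> 0\<close> by (simp add: a)
  qed
  obtain p0 where p0: "p0 \<in> K" using False by auto
  have sumpos: "- a1 - a2 > 0"
  proof (rule ccontr)
    assume "\<not> - a1 - a2 > 0"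
    then have "a1 = 0" "a2 = 0" using a1 a2 by auto
    then show False using ab(1) p0 b0 by (auto simp: S_def a)
  qed
  define \<theta> where "\<theta> = - a1 / (- a1 - a2)"
  have "\<forall>p\<in>K. \<theta> * G p + (1 - \<theta>) * g p > 0"
  proof
    fix p assume p: "p \<in> K"
    have "a1 * G p + a2 * g p < b" using ab(1) p by (auto simp: S_def a)
    then have pos: "(- a1) * G p + (- a2) * g p > 0" using b0 by linarith
    have "1 - \<theta> = - a2 / (- a1 - a2)" using sumpos by (simp add: \<theta>_def field_simps)
    then have "\<theta> * G p + (1 - \<theta>) * g p = (- a1) / (- a1 - a2) * G p + (- a2) / (- a1 - a2) * g p"
      by (simp only: \<theta>_def)
    also have "\<dots> = ((- a1) * G p + (- a2) * g p) / (- a1 - a2)"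
      by (metis add_divide_distrib times_divide_eq_left)
    finally have "\<theta> * G p + (1 - \<theta>) * g p = ((- a1) * G p + (- a2) * g p) / (- a1 - a2)" .
    then show "\<theta> * G p + (1 - \<theta>) * g p > 0" using pos sumpos by simp
  qed
  moreover have "0 \<le> \<theta>" "\<theta> \<le> 1" using a1 a2 sumpos by (auto simp: \<theta>_def field_simps)
  ultimately show ?thesis by blast
qed

lemma minimax:
  fixes K :: "'a::euclidean_space set"
  assumes "finite J" "J \<noteq> {}" "compact K" "convex K" "\<forall>j\<in>J. aff (g j)"
    "\<forall>p\<in>K. \<exists>j\<in>J. g j p > 0"
  shows "\<exists>w. (\<forall>j\<in>J. w j \<ge> 0) \<and> sum w J = 1 \<and> (\<forall>p\<in>K. (\<Sum>j\<in>J. w j * g j p) > 0)"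
  using assms(1,2,3,4,5,6)
proof (induction J arbitrary: K rule: finite_ne_induct)
  case (singleton j)
  then show ?case by (intro exI[of _ "\<lambda>_. 1"]) auto
next
  case (insert a J)
  define K' where "K' = K \<inter> {p. g a p \<le> 0}"
  note IH = insert.IH and pr = insert.prems and anJ = \<open>a \<notin> J\<close> and finJ = \<open>finite J\<close>
  have aa: "aff (g a)" using pr by auto
  then obtain c b where cb: "\<forall>x. g a x = c \<bullet> x + b" unfolding aff_def by auto
  have K'eq: "K' = K \<inter> {p. c \<bullet> p \<le> - b}" unfolding K'_def using cb by (auto; smt (verit))
  have kK': "compact K'" unfolding K'eq
    by (intro compact_Int_closed pr closed_halfspace_le)
  have cK': "convex K'" unfolding K'eq by (intro convex_Int pr convex_halfspace_le)
  have "\<forall>p\<in>K'. \<exists>j\<in>J. g j p > 0" using pr(4) by (force simp: K'_def)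
  then obtain w' where w': "\<forall>j\<in>J. w' j \<ge> 0" "sum w' J = 1" "\<forall>p\<in>K'. (\<Sum>j\<in>J. w' j * g j p) > 0"
    using IH[OF kK' cK'] pr(3) by auto
  define G where "G = (\<lambda>p. \<Sum>j\<in>J. w' j * g j p)"
  have aG: "aff G" unfolding G_def using aff_sum finJ pr(3) by auto
  have "\<forall>p\<in>K. G p > 0 \<or> g a p > 0" using w'(3) by (auto simp: K'_def G_def not_le)
  then obtain \<theta> where th: "0 \<le> \<theta>" "\<theta> \<le> 1" "\<forall>p\<in>K. \<theta> * G p + (1 - \<theta>) * g a p > 0"
    using minimax2[OF pr(1,2) aG aa] by auto
  define w where "w = (\<lambda>j. if j = a then 1 - \<theta> else \<theta> * w' j)"
  have s1: "sum w (insert a J) = 1"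
  proof -
    have "sum w J = (\<Sum>j\<in>J. \<theta> * w' j)" using anJ by (intro sum.cong) (auto simp: w_def)
    then show ?thesis using finJ anJ w'(2) by (simp add: w_def sum_distrib_left[symmetric])
  qed
  have s2: "(\<Sum>j\<in>insert a J. w j * g j p) = \<theta> * G p + (1 - \<theta>) * g a p" for p
  proof -
    have "(\<Sum>j\<in>J. w j * g j p) = (\<Sum>j\<in>J. \<theta> * (w' j * g j p))" using anJ
      by (intro sum.cong) (auto simp: w_def)
    then show ?thesis using finJ anJ by (simp add: w_def G_def sum_distrib_left[symmetric])
  qed
  show ?case using s1 s2 th w'(1) by (intro exI[of _ w]) (auto simp: w_def)
qed




lemma inr_ge:
  assumes "(\<lambda>x. h *\<^sub>R x + t) ` B \<subseteq> C" "h \<ge> 0" "C \<noteq> {}"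
  shows "ereal h \<le> inradius_rel B C"
  unfolding inradius_rel_def using assms by (auto intro!: Sup_upper)

lemma inr_nonneg:
  assumes "C \<noteq> {}" shows "0 \<le> inradius_rel B C"
proof -
  obtain t where "t \<in> C" using assms by auto
  then have "(\<lambda>x. 0 *\<^sub>R x + t) ` B \<subseteq> C" by auto
  from inr_ge[OF this _ assms] show ?thesis by (simp add: zero_ereal_def)
qed

lemma inr_le:
  assumes "C \<noteq> {}" "\<And>h t. h \<ge> 0 \<Longrightarrow> (\<lambda>x. h *\<^sub>R x + t) ` B \<subseteq> C \<Longrightarrow> ereal h \<le> X"
  shows "inradius_rel B C \<le> X"
  unfolding inradius_rel_def using assms by (auto intro!: Sup_least)

lemma inr_mono:
  assumes "C \<noteq> {}" "C \<subseteq> D" shows "inradius_rel B C \<le> inradius_rel B D"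
  using assms by (intro inr_le inr_ge) auto

lemma aff_aff_eval: "aff (\<lambda>x. aff_eval l x)"
  unfolding aff_def aff_eval_def by blast

lemma aff_diff: "aff f \<Longrightarrow> aff g \<Longrightarrow> aff (\<lambda>x. a * f x + b * g x + c)"
proof -
  assume "aff f" "aff g"
  then obtain c1 b1 c2 b2 where h: "\<forall>x. f x = c1 \<bullet> x + b1" "\<forall>x. g x = c2 \<bullet> x + b2"
    unfolding aff_def by blast
  have "a * f x + b * g x + c = (a *\<^sub>R c1 + b *\<^sub>R c2) \<bullet> x + (a * b1 + b * b2 + c)" for x
    using h by (auto simp: inner_add_left algebra_simps)
  then show ?thesis unfolding aff_def by blast
qed

lemma aff_minus: assumes "aff f" "aff g" shows "aff (\<lambda>x. f x - g x)"
proof -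
  have "aff (\<lambda>x. 1 * f x + (-1) * g x + 0)" using aff_diff[OF assms] .
  then show ?thesis by simp
qed

lemma ex_argmin: "finite A \<Longrightarrow> A \<noteq> {} \<Longrightarrow> \<exists>m\<in>A. \<forall>j\<in>A. (f m :: real) \<le> f j"
proof -
  assume a: "finite A" "A \<noteq> {}"
  then have "Min (f ` A) \<in> f ` A" by simp
  then obtain m where "m \<in> A" "f m = Min (f ` A)" by auto
  then show ?thesis using a by (auto intro!: bexI[of _ m])
qed

lemma ereal_member_le_sum: "(i::nat) \<in> S \<Longrightarrow> finite S \<Longrightarrow> \<forall>j\<in>S. (0::ereal) \<le> r j \<Longrightarrow> r i \<le> sum r S"
proof -
  assume a: "i \<in> S" "finite S" "\<forall>j\<in>S. (0::ereal) \<le> r j"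
  have "0 \<le> sum r (S - {i})" using a by (intro sum_nonneg) auto
  then have "r i + 0 \<le> r i + sum r (S - {i})" by (rule add_left_mono)
  then show ?thesis using sum.remove[OF a(2,1), of r] by simp
qed

lemma key:
  fixes B K :: "'a::euclidean_space set" and lam :: "nat \<Rightarrow> 'a \<Rightarrow> real"
  assumes cB: "compact B" "convex B" "B \<noteq> {}" and hpos: "h > 0"
    and Kdef: "K = (\<lambda>x. h *\<^sub>R x + t) ` B"
    and finS: "finite S" and neS: "S \<noteq> {}" and afl: "\<forall>j\<in>S. aff (lam j)"
    and Edef: "E = (\<lambda>i. {x\<in>K. \<forall>j\<in>S. lam i x \<le> lam j x})"
    and Ene: "\<forall>i\<in>S. E i \<noteq> {}"
  shows "ereal h \<le> (\<Sum>i\<in>S. inradius_rel B (E i))"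
proof (rule ccontr)
  define r where "r = (\<lambda>i. inradius_rel B (E i))"
  assume "\<not> ereal h \<le> (\<Sum>i\<in>S. inradius_rel B (E i))"
  then have neg: "(\<Sum>i\<in>S. r i) < ereal h" by (simp add: r_def not_le)
  have rnn: "\<forall>i\<in>S. 0 \<le> r i" using Ene by (auto simp: r_def intro: inr_nonneg)
  have rle: "r i \<le> (\<Sum>i\<in>S. r i)" if "i \<in> S" for i
    using ereal_member_le_sum that rnn finS by blast
  define \<rho> where "\<rho> = (\<lambda>i. real_of_ereal (r i))"
  have r\<rho>: "r i = ereal (\<rho> i)" if "i \<in> S" for i
  proof -
    have "r i < ereal h" using rle[OF that] neg by simp
    then show ?thesis using rnn that by (cases "r i") (auto simp: \<rho>_def)
  qed
  have \<rho>nn: "\<forall>i\<in>S. 0 \<le> \<rho> i" using rnn r\<rho> by auto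
  have "(\<Sum>i\<in>S. r i) = (\<Sum>i\<in>S. ereal (\<rho> i))" using r\<rho> by (intro sum.cong) auto
  also have "\<dots> = ereal (\<Sum>i\<in>S. \<rho> i)" by (rule sum_ereal)
  finally have sum\<rho>: "(\<Sum>i\<in>S. \<rho> i) < h" using neg by simp
  define N where "N = card S"
  have Npos: "N \<ge> 1" using finS neS by (simp add: N_def Suc_le_eq card_gt_0_iff)
  define \<epsilon> where "\<epsilon> = (h - (\<Sum>i\<in>S. \<rho> i)) / N"
  have epos: "\<epsilon> > 0" using sum\<rho> Npos by (simp add: \<epsilon>_def)
  have ele: "\<epsilon> \<le> h - (\<Sum>i\<in>S. \<rho> i)" using sum\<rho> Npos
    by (simp add: \<epsilon>_def divide_le_eq)
  define s where "s = (\<lambda>i. (\<rho> i + \<epsilon>) / h)"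
  have spos: "\<forall>i\<in>S. s i > 0" using \<rho>nn epos hpos by (auto simp: s_def)
  have sle1: "\<forall>i\<in>S. s i \<le> 1"
  proof
    fix i assume i: "i \<in> S"
    have "\<rho> i \<le> (\<Sum>i\<in>S. \<rho> i)" by (rule member_le_sum) (use i \<rho>nn finS in auto)
    then show "s i \<le> 1" using ele hpos by (simp add: s_def)
  qed
  have ssum: "(\<Sum>i\<in>S. s i) = 1"
  proof -
    have "(\<Sum>i\<in>S. s i) = ((\<Sum>i\<in>S. \<rho> i) + N * \<epsilon>) / h"
      by (simp add: s_def sum_divide_distrib[symmetric] sum.distrib N_def)
    also have "N * \<epsilon> = h - (\<Sum>i\<in>S. \<rho> i)" using Npos by (simp add: \<epsilon>_def)
    finally show ?thesis using hpos by simp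
  qed
  have sh: "s i * h = \<rho> i + \<epsilon>" for i using hpos by (simp add: s_def)
  have cK: "convex K" unfolding Kdef using convex_affinity[OF cB(2), of t h]
    by (simp add: add.commute)
  have kK: "compact K" unfolding Kdef
    by (rule compact_continuous_image[OF _ cB(1)]) (auto intro!: continuous_intros)
  have neK: "K \<noteq> {}" using cB(3) by (simp add: Kdef)
  have contl: "continuous_on K (\<lambda>x. lam i x - lam j x)" if "i \<in> S" "j \<in> S" for i j
    using aff_cont[OF aff_minus] afl that by blast
  have "\<forall>ij\<in>S \<times> S. \<exists>y. y \<in> K \<and> (\<forall>x\<in>K. lam (fst ij) x - lam (snd ij) x \<le> lam (fst ij) y - lam (snd ij) y)"
  proof
    fix ij assume "ij \<in> S \<times> S"
    then have "fst ij \<in> S" "snd ij \<in> S" by auto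
    from continuous_attains_sup[OF kK neK contl[OF this]]
    show "\<exists>y. y \<in> K \<and> (\<forall>x\<in>K. lam (fst ij) x - lam (snd ij) x \<le> lam (fst ij) y - lam (snd ij) y)"
      by blast
  qed
  from bchoice[OF this] obtain y where y: "\<forall>ij\<in>S \<times> S. y ij \<in> K \<and> (\<forall>x\<in>K. lam (fst ij) x - lam (snd ij) x \<le> lam (fst ij) (y ij) - lam (snd ij) (y ij))"
    by blast
  define M where "M = (\<lambda>i j. lam i (y (i, j)) - lam j (y (i, j)))"
  have Mge: "lam i x - lam j x \<le> M i j" if "i \<in> S" "j \<in> S" "x \<in> K" for i j x
    using y that by (auto simp: M_def)
  define g where "g = (\<lambda>i j p. s i * M i j + (1 - s i) * (lam i p - lam j p))"
  have nocopy: "\<exists>j\<in>S. g i j p > 0" if i: "i \<in> S" and p: "p \<in> K" for i p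
  proof (rule ccontr)
    assume "\<not> (\<exists>j\<in>S. g i j p > 0)"
    then have gle: "\<forall>j\<in>S. g i j p \<le> 0" by (simp add: not_less)
    let ?\<sigma> = "s i"
    have sub: "(\<lambda>x. (?\<sigma> * h) *\<^sub>R x + (?\<sigma> *\<^sub>R t + (1 - ?\<sigma>) *\<^sub>R p)) ` B \<subseteq> E i"
    proof
      fix z assume "z \<in> (\<lambda>x. (?\<sigma> * h) *\<^sub>R x + (?\<sigma> *\<^sub>R t + (1 - ?\<sigma>) *\<^sub>R p)) ` B"
      then obtain x where x: "x \<in> B" and z: "z = (?\<sigma> * h) *\<^sub>R x + (?\<sigma> *\<^sub>R t + (1 - ?\<sigma>) *\<^sub>R p)" by auto
      define kx where "kx = h *\<^sub>R x + t"
      have kx: "kx \<in> K" using x unfolding Kdef kx_def by (rule imageI)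
      have z2: "z = ?\<sigma> *\<^sub>R kx + (1 - ?\<sigma>) *\<^sub>R p" by (simp add: z kx_def scaleR_add_right)
      have zK: "z \<in> K" unfolding z2
        by (rule convexD[OF cK kx p]) (use spos sle1 i in auto)
      have "lam i z \<le> lam j z" if j: "j \<in> S" for j
      proof -
        have li: "lam i z = ?\<sigma> * lam i kx + (1 - ?\<sigma>) * lam i p"
          unfolding z2 by (rule aff_comb) (use afl i in auto)
        have lj: "lam j z = ?\<sigma> * lam j kx + (1 - ?\<sigma>) * lam j p"
          unfolding z2 by (rule aff_comb) (use afl j in auto)
        have "?\<sigma> * (lam i kx - lam j kx) \<le> ?\<sigma> * M i j"
          using Mge[OF i j kx] spos i by (intro mult_left_mono) auto
        then have "lam i z - lam j z \<le> g i j p" unfolding li lj g_def by (simp add: algebra_simps)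
        then show ?thesis using gle j by auto
      qed
      then show "z \<in> E i" using zK by (simp add: Edef)
    qed
    have "ereal (?\<sigma> * h) \<le> r i"
      unfolding r_def by (rule inr_ge[OF sub]) (use spos hpos i Ene in auto)
    then show False using r\<rho>[OF i] sh[of i] epos by simp
  qed
  have "\<forall>i\<in>S. \<exists>w. (\<forall>j\<in>S. w j \<ge> 0) \<and> sum w S = 1 \<and> (\<forall>p\<in>K. (\<Sum>j\<in>S. w j * g i j p) > 0)"
  proof
    fix i assume i: "i \<in> S"
    have "\<forall>j\<in>S. aff (g i j)"
    proof
      fix j assume j: "j \<in> S"
      have "g i j = (\<lambda>p. (1 - s i) * lam i p + (- (1 - s i)) * lam j p + s i * M i j)"
        by (auto simp: g_def algebra_simps)
      moreover have "aff (\<lambda>p. (1 - s i) * lam i p + (- (1 - s i)) * lam j p + s i * M i j)"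
        using aff_diff afl i j by blast
      ultimately show "aff (g i j)" by simp
    qed
    then show "\<exists>w. (\<forall>j\<in>S. w j \<ge> 0) \<and> sum w S = 1 \<and> (\<forall>p\<in>K. (\<Sum>j\<in>S. w j * g i j p) > 0)"
      using minimax[OF finS neS kK cK] nocopy i by auto
  qed
  from bchoice[OF this] obtain w where w: "\<forall>i\<in>S. (\<forall>j\<in>S. w i j \<ge> 0) \<and> sum (w i) S = 1 \<and> (\<forall>p\<in>K. (\<Sum>j\<in>S. w i j * g i j p) > 0)"
    by blast
  define F where "F = (\<lambda>i x. \<Sum>j\<in>S. w i j * (lam i x - lam j x))"
  have contF: "continuous_on K (F i)" if i: "i \<in> S" for i
  proof -
    have "aff (\<lambda>x. \<Sum>j\<in>S. w i j * (lam i x - lam j x))"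
    proof (rule aff_sum[OF finS])
      show "\<forall>j\<in>S. aff (\<lambda>x. lam i x - lam j x)"
        using aff_minus afl i by blast
    qed
    then show ?thesis unfolding F_def by (rule aff_cont)
  qed
  have "\<forall>i\<in>S. \<exists>p. p \<in> K \<and> (\<forall>x\<in>K. F i p \<le> F i x)"
  proof
    fix i assume "i \<in> S"
    from continuous_attains_inf[OF kK neK contF[OF this]]
    show "\<exists>p. p \<in> K \<and> (\<forall>x\<in>K. F i p \<le> F i x)" by blast
  qed
  from bchoice[OF this] obtain pm where pm: "\<forall>i\<in>S. pm i \<in> K \<and> (\<forall>x\<in>K. F i (pm i) \<le> F i x)" by blast
  define \<alpha> where "\<alpha> = (\<lambda>i. - F i (pm i))"
  have negF: "(\<Sum>j\<in>S. w l j * (lam j x - lam l x)) = - F l x" for l x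
    by (simp add: F_def sum_negf[symmetric] algebra_simps)
  define V where "V = {v. \<exists>x\<in>K. v = (\<lambda>j. lam j x)}"
  have Vc: "\<forall>v\<in>V. \<forall>l\<in>S. (\<Sum>j\<in>S. w l j * (v j - v l)) \<le> \<alpha> l"
    using pm by (auto simp: V_def negF \<alpha>_def)
  have anneg: "\<forall>l\<in>S. \<alpha> l \<ge> 0"
  proof
    fix l assume l: "l \<in> S"
    obtain x where x: "x \<in> E l" using Ene l by auto
    have "F l x \<le> 0" unfolding F_def
      using x w l by (auto simp: Edef intro!: sum_nonpos mult_nonneg_nonpos)
    moreover have "F l (pm l) \<le> F l x" using pm l x by (auto simp: Edef)
    ultimately show "\<alpha> l \<ge> 0" by (simp add: \<alpha>_def)
  qed
  have ineq: "s i * (\<alpha> i + (\<Sum>j\<in>S. w i j * M i j)) > \<alpha> i" if i: "i \<in> S" for i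
  proof -
    have "0 < (\<Sum>j\<in>S. w i j * g i j (pm i))" using w pm i by auto
    also have "(\<Sum>j\<in>S. w i j * g i j (pm i)) = (\<Sum>j\<in>S. s i * (w i j * M i j) + (1 - s i) * (w i j * (lam i (pm i) - lam j (pm i))))"
      by (rule sum.cong) (auto simp: g_def algebra_simps)
    also have "\<dots> = s i * (\<Sum>j\<in>S. w i j * M i j) + (1 - s i) * F i (pm i)"
      by (simp add: sum.distrib sum_distrib_left F_def)
    finally show ?thesis by (simp add: \<alpha>_def algebra_simps)
  qed
  have stW: "stoch S w" using w by (auto simp: stoch_def)
  obtain \<pi> i0 where pi: "stat S w \<pi>" and i0: "i0 \<in> S" "\<pi> i0 > 0"
    using stat_exists[OF finS neS stW] by auto
  have pinn: "\<forall>l\<in>S. \<pi> l \<ge> 0" using pi by (auto simp: stat_def)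
  define X where "X = (\<Sum>l\<in>S. \<pi> l * \<alpha> l)"
  have mb: "\<pi> i * (\<alpha> i + (\<Sum>j\<in>S. w i j * M i j)) \<le> X" if i: "i \<in> S" for i
  proof -
    have "\<forall>j\<in>S. (\<lambda>l. lam l (y (i, j))) \<in> V" using y i by (auto simp: V_def)
    from markov_bound[OF finS stW pi anneg Vc i this]
    show ?thesis by (simp add: M_def X_def)
  qed
  have each: "\<pi> i * \<alpha> i \<le> s i * X" if i: "i \<in> S" for i
  proof -
    have "\<pi> i * \<alpha> i \<le> \<pi> i * (s i * (\<alpha> i + (\<Sum>j\<in>S. w i j * M i j)))"
      using ineq[OF i] pinn i by (intro mult_left_mono) auto
    also have "\<dots> = s i * (\<pi> i * (\<alpha> i + (\<Sum>j\<in>S. w i j * M i j)))" by simp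
    also have "\<dots> \<le> s i * X" using mb[OF i] spos i by (intro mult_left_mono) auto
    finally show ?thesis .
  qed
  have strict: "\<pi> i0 * \<alpha> i0 < s i0 * X"
  proof -
    have "\<pi> i0 * \<alpha> i0 < \<pi> i0 * (s i0 * (\<alpha> i0 + (\<Sum>j\<in>S. w i0 j * M i0 j)))"
      using ineq[OF i0(1)] i0(2) by (intro mult_strict_left_mono) auto
    also have "\<dots> = s i0 * (\<pi> i0 * (\<alpha> i0 + (\<Sum>j\<in>S. w i0 j * M i0 j)))" by simp
    also have "\<dots> \<le> s i0 * X" using mb[OF i0(1)] spos i0 by (intro mult_left_mono) auto
    finally show ?thesis .
  qed
  have "X < (\<Sum>i\<in>S. s i * X)" unfolding X_def[of]
    using sum_strict_mono_ex1[OF finS, of "\<lambda>i. \<pi> i * \<alpha> i" "\<lambda>i. s i * X"] each strict i0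
    by (auto simp: X_def)
  also have "(\<Sum>i\<in>S. s i * X) = X" using ssum by (simp add: sum_distrib_right[symmetric])
  finally show False by simp
qed



lemma sum_list_ereal_nonneg: "\<forall>x\<in>set xs. (0::ereal) \<le> f x \<Longrightarrow> 0 \<le> (\<Sum>x\<leftarrow>xs. f x)"
  by (induction xs) (auto intro: add_nonneg_nonneg)

lemma core:
  fixes B :: "'a::euclidean_space set"
  assumes cB: "compact B" "convex B" "B \<noteq> {}" and hpos: "h > 0"
    and sub: "(\<lambda>x. h *\<^sub>R x + t) ` B \<subseteq> C" and lsne: "ls \<noteq> []"
    and ne: "\<forall>D\<in>set (affine_partition C ls). D \<noteq> {}"
  shows "ereal h \<le> (\<Sum>D\<leftarrow>affine_partition C ls. inradius_rel B D)"
proof -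
  define n where "n = length ls"
  define lam where "lam = (\<lambda>j x. aff_eval (ls ! j) x)"
  define Dp where "Dp = (\<lambda>i. C \<inter> {x. \<forall>j<n. j \<noteq> i \<longrightarrow> lam i x \<le> lam j x})"
  have AP: "affine_partition C ls = map Dp [0..<n]"
    by (simp add: affine_partition_def Dp_def n_def lam_def)
  have sumAP: "(\<Sum>D\<leftarrow>affine_partition C ls. inradius_rel B D) = (\<Sum>i\<in>{0..<n}. inradius_rel B (Dp i))"
    unfolding AP by (simp add: interv_sum_list_conv_sum_set_nat comp_def)
  have Dne: "Dp i \<noteq> {}" if "i < n" for i using ne that by (auto simp: AP)
  have npos: "n > 0" using lsne by (simp add: n_def)
  define K where "K = (\<lambda>x. h *\<^sub>R x + t) ` B"
  have neK: "K \<noteq> {}" using cB(3) by (simp add: K_def)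
  define S where "S = {i. i < n \<and> (\<exists>x\<in>K. \<forall>j<n. lam i x \<le> lam j x)}"
  define E where "E = (\<lambda>i. {x\<in>K. \<forall>j\<in>S. lam i x \<le> lam j x})"
  have argmin: "\<exists>m<n. \<forall>j<n. lam m x \<le> lam j x" for x
    using ex_argmin[of "{..<n}" "\<lambda>j. lam j x"] npos by auto
  have finS: "finite S" by (simp add: S_def)
  have neS: "S \<noteq> {}"
  proof -
    obtain x where x: "x \<in> K" using neK by auto
    obtain m where "m < n" "\<forall>j<n. lam m x \<le> lam j x" using argmin by blast
    then have "m \<in> S" using x by (auto simp: S_def)
    then show ?thesis by auto
  qed
  have afl: "\<forall>j\<in>S. aff (lam j)" by (simp add: lam_def aff_aff_eval)
  have Ene: "\<forall>i\<in>S. E i \<noteq> {}"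
  proof
    fix i assume "i \<in> S"
    then obtain x where "x \<in> K" "\<forall>j<n. lam i x \<le> lam j x" by (auto simp: S_def)
    then have "x \<in> E i" by (auto simp: E_def S_def)
    then show "E i \<noteq> {}" by auto
  qed
  have ED: "E i \<subseteq> Dp i" if i: "i \<in> S" for i
  proof
    fix x assume x: "x \<in> E i"
    have xK: "x \<in> K" using x by (simp add: E_def)
    obtain m where m: "m < n" "\<forall>j<n. lam m x \<le> lam j x" using argmin by blast
    then have mS: "m \<in> S" using xK by (auto simp: S_def)
    have "lam i x \<le> lam j x" if "j < n" for j
      using x mS m that by (auto simp: E_def intro: order_trans)
    then show "x \<in> Dp i" using xK sub by (auto simp: Dp_def K_def)
  qed
  have "ereal h \<le> (\<Sum>i\<in>S. inradius_rel B (E i))"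
    by (rule key[OF cB hpos K_def finS neS afl E_def Ene])
  also have "\<dots> \<le> (\<Sum>i\<in>S. inradius_rel B (Dp i))"
    by (rule sum_mono, rule inr_mono) (use Ene ED in auto)
  also have "\<dots> \<le> (\<Sum>i\<in>{0..<n}. inradius_rel B (Dp i))"
  proof -
    have Ssub: "S \<subseteq> {0..<n}" by (auto simp: S_def)
    have "(\<Sum>i\<in>{0..<n}. inradius_rel B (Dp i)) = (\<Sum>i\<in>{0..<n} - S. inradius_rel B (Dp i)) + (\<Sum>i\<in>S. inradius_rel B (Dp i))"
      using sum.subset_diff[OF Ssub] by simp
    moreover have "0 \<le> (\<Sum>i\<in>{0..<n} - S. inradius_rel B (Dp i))"
      by (rule sum_nonneg) (use Dne in \<open>auto intro: inr_nonneg\<close>)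
    ultimately show ?thesis by (simp add: add_increasing)
  qed
  finally show ?thesis using sumAP by simp
qed

theorem mainTheorem6:
  fixes B :: "'a::euclidean_space set" and P :: "'a set list"
  assumes "convex_body B"
    and "hier_affine_partition B P"
    and "\<forall>C\<in>set P. C \<noteq> {}"
  shows "(\<Sum>C\<leftarrow>P. inradius_rel B C) \<ge> 1"
proof -
  have cB: "compact B" "convex B" "B \<noteq> {}"
    using assms(1) interior_subset[of B] unfolding convex_body_def by auto
  have sumAP_ge: "inradius_rel B C \<le> (\<Sum>D\<leftarrow>affine_partition C ls. inradius_rel B D)"
    if ls: "ls \<noteq> []" and ne: "\<forall>D\<in>set (affine_partition C ls). D \<noteq> {}" and Cne: "C \<noteq> {}" for C ls
  proof (rule inr_le[OF Cne])
    fix h t assume h: "0 \<le> h" and s: "(\<lambda>x. h *\<^sub>R x + t) ` B \<subseteq> C"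
    show "ereal h \<le> (\<Sum>D\<leftarrow>affine_partition C ls. inradius_rel B D)"
    proof (cases "h = 0")
      case True
      have "0 \<le> (\<Sum>D\<leftarrow>affine_partition C ls. inradius_rel B D)"
        using ne by (intro sum_list_ereal_nonneg) (auto intro: inr_nonneg)
      then show ?thesis using True by (simp add: zero_ereal_def)
    next
      case False
      then show ?thesis using core[OF cB _ s ls ne] h by simp
    qed
  qed
  have "(\<forall>C\<in>set P. C \<noteq> {}) \<longrightarrow> 1 \<le> (\<Sum>C\<leftarrow>P. inradius_rel B C)"
    using assms(2)
  proof (induction rule: hier_affine_partition.induct)
    case (base ls)
    show ?case
    proof
      assume ne: "\<forall>C\<in>set (affine_partition B ls). C \<noteq> {}"
      have "(\<lambda>x. 1 *\<^sub>R x + 0) ` B \<subseteq> B" by simp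
      from core[OF cB _ this base ne] show "1 \<le> (\<Sum>C\<leftarrow>affine_partition B ls. inradius_rel B C)"
        by (simp add: one_ereal_def)
    qed
  next
    case (refine P i ls)
    show ?case
    proof
      assume ne: "\<forall>C\<in>set (take i P @ affine_partition (P ! i) ls @ drop (Suc i) P). C \<noteq> {}"
      let ?A = "affine_partition (P ! i) ls"
      have neA: "\<forall>D\<in>set ?A. D \<noteq> {}" using ne by auto
      have Ane: "?A \<noteq> []" using refine(3) by (simp add: affine_partition_def)
      have "hd ?A \<in> set ?A" using Ane by simp
      moreover have "\<forall>D\<in>set ?A. D \<subseteq> P ! i" by (auto simp: affine_partition_def)
      ultimately have Pine: "P ! i \<noteq> {}" using neA by blast
      have Peq: "P = take i P @ P ! i # drop (Suc i) P" using id_take_nth_drop[OF refine(2)] .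
      have neP: "\<forall>C\<in>set P. C \<noteq> {}"
      proof
        fix C assume "C \<in> set P"
        then have "C \<in> set (take i P @ P ! i # drop (Suc i) P)" using Peq by simp
        then show "C \<noteq> {}" using ne Pine by auto
      qed
      have IH: "1 \<le> (\<Sum>C\<leftarrow>P. inradius_rel B C)" using refine.IH neP by blast
      also have "(\<Sum>C\<leftarrow>P. inradius_rel B C) = (\<Sum>C\<leftarrow>take i P. inradius_rel B C) + inradius_rel B (P ! i) + (\<Sum>C\<leftarrow>drop (Suc i) P. inradius_rel B C)"
        by (subst Peq) (simp add: add.assoc)
      also have "\<dots> \<le> (\<Sum>C\<leftarrow>take i P. inradius_rel B C) + (\<Sum>C\<leftarrow>?A. inradius_rel B C) + (\<Sum>C\<leftarrow>drop (Suc i) P. inradius_rel B C)"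
        using sumAP_ge[OF refine(3) neA Pine] by (intro add_mono) auto
      also have "\<dots> = (\<Sum>C\<leftarrow>take i P @ ?A @ drop (Suc i) P. inradius_rel B C)"
        by (simp add: add.assoc)
      finally show "1 \<le> (\<Sum>C\<leftarrow>take i P @ ?A @ drop (Suc i) P. inradius_rel B C)" .
    qed
  qed
  then show ?thesis using assms(3) by simp
qed


end
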